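(* Let $L$ be a Leibniz algebra over $F$ and $(l,r,V)$ a representation of $L$. Let $A$ be a subspace of $L$ and $x\in n_L(A)$. Then for every integer $k\ge 0$ and every $a\in A$: (i) $\delta_{k+1}:=r_a^{k+1}r_x-r_xr_a^{k+1}\in (r_A)^{k+1}$; (ii) $\beta_{k+1}:=r_x^{k+1}r_a-r_ar_x^{k+1}\in r_Ar_x^{k}+\cdots+r_Ar_x+r_A$.
   Context: $F$ is an algebraically closed field of characteristic zero; all spaces are finite-dimensional. A (right) Leibniz algebra is a vector space $L$ with bilinear bracket satisfying $[x,[y,z]]=[[x,y],z]-[[x,z],y]$. A representation $(l,r,V)$ of $L$ is a vector space $V$ with linear maps $l,r:L\to\mathrm{End}_F(V)$, $x\mapsto l_x,r_x$, such that $r_{[x,y]}=r_yr_x-r_xr_y$, $l_{[x,y]}=r_yl_x-l_xr_y$, $l_{[x,y]}=r_yl_x+l_xl_y$ (products are compositions). For a subspace $A\subseteq L$, $r_A=\{r_a:a\in A\}$ (a subspace of $\mathrm{End}_F(V)$); $(r_A)^p$ is the linear span of all compositions $r_{a_1}\cdots r_{a_p}$ with $a_i\in A$; $r_Ar_x^j=\{r_a r_x^j: a\in A\}$, with $r_x^0=\mathrm{id}_V$; $+$ denotes sum of subspaces. The normalizer of $A$ is $n_L(A)=\{y\in L: [y,a]\in A \text{ and } [a,y]\in A \text{ for all } a\in A\}$. *)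

theory Defs
  imports Main "HOL-Computational_Algebra.Polynomial"
begin

definition alg_closed_field :: "'k::field itself \<Rightarrow> bool" where
  "alg_closed_field _ \<longleftrightarrow> (\<forall>p::'k poly. degree p \<ge> 1 \<longrightarrow> (\<exists>z. poly p z = 0))"

definition fd_vector_space :: "('k::field \<Rightarrow> 'v::ab_group_add \<Rightarrow> 'v) \<Rightarrow> bool" where
  "fd_vector_space s \<longleftrightarrow> vector_space s \<and> (\<exists>B. finite B \<and> module.span s B = UNIV)"

text \<open>Right Leibniz algebra: bilinear bracket with [x,[y,z]] = [[x,y],z] - [[x,z],y].\<close>
definition leibniz_algebra ::
  "('k::field \<Rightarrow> 'l::ab_group_add \<Rightarrow> 'l) \<Rightarrow> ('l \<Rightarrow> 'l \<Rightarrow> 'l) \<Rightarrow> bool" where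
  "leibniz_algebra sL br \<longleftrightarrow> fd_vector_space sL
     \<and> (\<forall>z. Vector_Spaces.linear sL sL (\<lambda>x. br x z))
     \<and> (\<forall>z. Vector_Spaces.linear sL sL (br z))
     \<and> (\<forall>x y z. br x (br y z) = br (br x y) z - br (br x z) y)"

definition leibniz_rep ::
  "('k::field \<Rightarrow> 'l::ab_group_add \<Rightarrow> 'l) \<Rightarrow> ('l \<Rightarrow> 'l \<Rightarrow> 'l)
   \<Rightarrow> ('k \<Rightarrow> 'v::ab_group_add \<Rightarrow> 'v) \<Rightarrow> ('l \<Rightarrow> 'v \<Rightarrow> 'v) \<Rightarrow> ('l \<Rightarrow> 'v \<Rightarrow> 'v) \<Rightarrow> bool" where
  "leibniz_rep sL br sV l r \<longleftrightarrow> fd_vector_space sV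
     \<and> (\<forall>x. Vector_Spaces.linear sV sV (l x)) \<and> (\<forall>x. Vector_Spaces.linear sV sV (r x))
     \<and> (\<forall>v. Vector_Spaces.linear sL sV (\<lambda>x. l x v)) \<and> (\<forall>v. Vector_Spaces.linear sL sV (\<lambda>x. r x v))
     \<and> (\<forall>x y v. r (br x y) v = (r y \<circ> r x) v - (r x \<circ> r y) v)
     \<and> (\<forall>x y v. l (br x y) v = (r y \<circ> l x) v - (l x \<circ> r y) v)
     \<and> (\<forall>x y v. l (br x y) v = (r y \<circ> l x) v + (l x \<circ> l y) v)"

definition normalizer :: "('l \<Rightarrow> 'l \<Rightarrow> 'l) \<Rightarrow> 'l set \<Rightarrow> 'l set" where
  "normalizer br A = {y. \<forall>a\<in>A. br y a \<in> A \<and> br a y \<in> A}"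

definition end_span :: "('k::field \<Rightarrow> 'v::ab_group_add \<Rightarrow> 'v) \<Rightarrow> ('v \<Rightarrow> 'v) set \<Rightarrow> ('v \<Rightarrow> 'v) set" where
  "end_span sV S = {T. \<exists>n (c::nat \<Rightarrow> 'k) f. (\<forall>i<n. f i \<in> S) \<and> T = (\<lambda>v. \<Sum>i<n. sV (c i) (f i v))}"

definition rA_power :: "('k::field \<Rightarrow> 'v::ab_group_add \<Rightarrow> 'v) \<Rightarrow> ('l \<Rightarrow> 'v \<Rightarrow> 'v) \<Rightarrow> 'l set \<Rightarrow> nat \<Rightarrow> ('v \<Rightarrow> 'v) set" where
  "rA_power sV r A p = end_span sV {foldr (\<circ>) (map r as) id | as. length as = p \<and> set as \<subseteq> A}"

text \<open>r_A r_x^k + ... + r_A r_x + r_A (sum of subspaces).\<close>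
definition rA_rx_sum :: "('l \<Rightarrow> 'v::ab_group_add \<Rightarrow> 'v) \<Rightarrow> 'l set \<Rightarrow> 'l \<Rightarrow> nat \<Rightarrow> ('v \<Rightarrow> 'v) set" where
  "rA_rx_sum r A x k = {T. \<exists>as. (\<forall>j\<le>k. as j \<in> A) \<and> T = (\<lambda>v. \<Sum>j\<le>k. r (as j) ((r x ^^ j) v))}"

end

theory Submission
  imports Defs
begin

lemma sum_split_add: "(\<Sum>i<n1+n2. g i) = (\<Sum>i<n1. g i) + (\<Sum>i<n2. g (n1+i::nat)) " for g :: "nat \<Rightarrow> 'a::comm_monoid_add"
  by (induction n2) (simp_all add: add.assoc)

lemma add_sum_gen:
  fixes g :: "'a::comm_monoid_add \<Rightarrow> 'b::comm_monoid_add" and h :: "nat \<Rightarrow> 'a"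
  assumes "\<And>u w. g (u + w) = g u + g w" "g 0 = 0"
  shows "g (\<Sum>i<(n::nat). h i) = (\<Sum>i<n. g (h i))"
proof (induction n)
  case 0 show ?case using assms(2) by simp
next
  case (Suc n) show ?case using Suc assms by simp
qed

lemma span_single:
  assumes "vector_space sV" "f \<in> S"
  shows "f \<in> end_span sV S"
  unfolding end_span_def
  apply (rule CollectI, rule exI[of _ 1], rule exI[of _ "\<lambda>_. 1"], rule exI[of _ "\<lambda>_. f"])
  using assms by (simp add: vector_space.vector_space_assms(4))

lemma span_add:
  assumes "T1 \<in> end_span sV S" "T2 \<in> end_span sV S"
  shows "(\<lambda>v. T1 v + T2 v) \<in> end_span sV S"
proof -
  obtain n1 :: nat and c1 f1 where 1: "\<forall>i<n1. f1 i \<in> S" "T1 = (\<lambda>v. \<Sum>i<n1. sV (c1 i) (f1 i v))"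
    using assms(1) unfolding end_span_def by (auto simp: mem_Collect_eq)
  obtain n2 :: nat and c2 f2 where 2: "\<forall>i<n2. f2 i \<in> S" "T2 = (\<lambda>v. \<Sum>i<n2. sV (c2 i) (f2 i v))"
    using assms(2) unfolding end_span_def by (auto simp: mem_Collect_eq)
  define c where "c i = (if i < n1 then c1 i else c2 (i - n1))" for i
  define f where "f i = (if i < n1 then f1 i else f2 (i - n1))" for i
  have "\<forall>i<n1+n2. f i \<in> S" using 1 2 by (auto simp: f_def)
  moreover have "(\<lambda>v. T1 v + T2 v) = (\<lambda>v. \<Sum>i<n1+n2. sV (c i) (f i v))"
    unfolding sum_split_add 1 2 by (simp add: c_def f_def)
  ultimately show ?thesis unfolding end_span_def by (auto simp: mem_Collect_eq)
qed

lemma span_comp: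
  assumes "T \<in> end_span sV S" "\<And>f. f \<in> S \<Longrightarrow> g \<circ> f \<in> S'"
    "\<And>u w. g (u + w) = g u + g w" "g 0 = 0" "\<And>c w. g (sV c w) = sV c (g w)"
  shows "(\<lambda>v. g (T v)) \<in> end_span sV S'"
proof -
  obtain n :: nat and c f where 1: "\<forall>i<n. f i \<in> S" "T = (\<lambda>v. \<Sum>i<n. sV (c i) (f i v))"
    using assms(1) unfolding end_span_def by (auto simp: mem_Collect_eq)
  have "\<forall>i<n. (g \<circ> f i) \<in> S'" using 1 assms(2) by blast
  moreover have "(\<lambda>v. g (T v)) = (\<lambda>v. \<Sum>i<n. sV (c i) ((g \<circ> f i) v))"
    unfolding 1 by (simp add: add_sum_gen[of g, OF assms(3,4)] assms(5))
  ultimately show ?thesis unfolding end_span_def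
    by (intro CollectI exI[of _ n] exI[of _ c] exI[of _ "\<lambda>i. g \<circ> f i"]) simp
qed

definition Tn :: "('l \<Rightarrow> 'v::ab_group_add \<Rightarrow> 'v) \<Rightarrow> 'l set \<Rightarrow> 'l \<Rightarrow> nat \<Rightarrow> ('v \<Rightarrow> 'v) set" where
  "Tn r A x n = {T. \<exists>as. (\<forall>j<n. as j \<in> A) \<and> T = (\<lambda>v. \<Sum>j<n. r (as j) ((r x ^^ j) v))}"

lemma Tn_add:
  assumes radd: "\<And>a b v. r (a + b) v = r a v + r b v" and Aadd: "\<And>a b. a \<in> A \<Longrightarrow> b \<in> A \<Longrightarrow> a + b \<in> A"
    and "T1 \<in> Tn r A x n" "T2 \<in> Tn r A x n"
  shows "(\<lambda>v. T1 v + T2 v) \<in> Tn r A x n"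
proof -
  obtain as1 where 1: "\<forall>j<n. as1 j \<in> A" "T1 = (\<lambda>v. \<Sum>j<n. r (as1 j) ((r x ^^ j) v))"
    using assms(3) unfolding Tn_def by auto
  obtain as2 where 2: "\<forall>j<n. as2 j \<in> A" "T2 = (\<lambda>v. \<Sum>j<n. r (as2 j) ((r x ^^ j) v))"
    using assms(4) unfolding Tn_def by auto
  show ?thesis unfolding Tn_def
    apply (intro CollectI exI[of _ "\<lambda>j. as1 j + as2 j"] conjI)
    using 1 2 Aadd apply simp
    unfolding 1 2 by (simp add: radd sum.distrib)
qed

lemma Tn_shift:
  assumes r0: "\<And>v. r 0 v = 0" and A0: "0 \<in> A" and "T \<in> Tn r A x n"
  shows "(\<lambda>v. T (r x v)) \<in> Tn r A x (Suc n)"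
proof -
  obtain as1 where 1: "\<forall>j<n. as1 j \<in> A" "T = (\<lambda>v. \<Sum>j<n. r (as1 j) ((r x ^^ j) v))"
    using assms(3) unfolding Tn_def by auto
  show ?thesis unfolding Tn_def
    apply (intro CollectI exI[of _ "\<lambda>j. if j = 0 then 0 else as1 (j - 1)"] conjI)
    using 1 A0 apply (auto)[1]
    unfolding 1 sum.lessThan_Suc_shift by (simp add: r0 funpow_Suc_right del: funpow.simps)
qed

lemma Tn_mono:
  assumes r0: "\<And>v. r 0 v = 0" and A0: "0 \<in> A" and "T \<in> Tn r A x n"
  shows "T \<in> Tn r A x (Suc n)"
proof -
  obtain as1 where 1: "\<forall>j<n. as1 j \<in> A" "T = (\<lambda>v. \<Sum>j<n. r (as1 j) ((r x ^^ j) v))"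
    using assms(3) unfolding Tn_def by auto
  show ?thesis unfolding Tn_def
    apply (intro CollectI exI[of _ "\<lambda>j. if j < n then as1 j else 0"] conjI)
    using 1 A0 apply (auto)[1]
    unfolding 1 by (simp add: r0)
qed

lemma Tn_top:
  assumes r0: "\<And>v. r 0 v = 0" and A0: "0 \<in> A" and "c \<in> A"
  shows "(\<lambda>v. r c ((r x ^^ n) v)) \<in> Tn r A x (Suc n)"
  unfolding Tn_def
  apply (intro CollectI exI[of _ "\<lambda>j. if j = n then c else 0"] conjI)
  using assms apply (auto)[1]
  by (simp add: r0)

lemma Tn_zero: "(\<lambda>v. 0) \<in> Tn r A x 0"
  unfolding Tn_def by simp

lemma funpow_add_gen:
  fixes f :: "'v::ab_group_add \<Rightarrow> 'v"
  assumes "\<And>u w. f (u + w) = f u + f (w::'v::ab_group_add)"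
  shows "(f ^^ n) (u + w) = (f ^^ n) u + (f ^^ n) w"
proof (induction n)
  case 0 show ?case by simp
next
  case (Suc n) show ?case using Suc assms by simp
qed

lemma foldr_replicate: fixes r :: "'l \<Rightarrow> 'v \<Rightarrow> 'v" shows "foldr (\<circ>) (map r (replicate n a)) id = r a ^^ n"
  by (induction n) simp_all


lemma part_ii:
  fixes r :: "'l::ab_group_add \<Rightarrow> 'v::ab_group_add \<Rightarrow> 'v" and br :: "'l \<Rightarrow> 'l \<Rightarrow> 'l"
  assumes radd: "\<And>a b v. r (a + b) v = r a v + r b v" and r0: "\<And>v. r 0 v = 0"
    and rxadd: "\<And>u w. r x (u + w) = r x u + r x w"
    and rbr: "\<And>a b v. r (br a b) v = r b (r a v) - r a (r b v)"
    and A0: "0 \<in> A" and Aadd: "\<And>a b. a \<in> A \<Longrightarrow> b \<in> A \<Longrightarrow> a + b \<in> A"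
    and Ax: "\<And>a. a \<in> A \<Longrightarrow> br a x \<in> A"
  shows "\<forall>a\<in>A. (\<lambda>v. (r x ^^ n) (r a v) - r a ((r x ^^ n) v)) \<in> Tn r A x n"
proof (induction n)
  case 0 show ?case by (simp add: Tn_zero)
next
  case (Suc n)
  show ?case
  proof
    fix a assume a: "a \<in> A"
    define c where "c = br a x"
    have c: "c \<in> A" using Ax a c_def by simp
    define B where "B b = (\<lambda>v. (r x ^^ n) (r b v) - r b ((r x ^^ n) v))" for b
    have fa: "\<And>u w. (r x ^^ n) (u + w) = (r x ^^ n) u + (r x ^^ n) w"
      by (rule funpow_add_gen) (rule rxadd)
    have eq: "(\<lambda>v. (r x ^^ Suc n) (r a v) - r a ((r x ^^ Suc n) v))
       = (\<lambda>v. B a (r x v) + (r c ((r x ^^ n) v) + B c v))"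
    proof
      fix v
      have 1: "r x (r a v) = r c v + r a (r x v)" using rbr[of a x v] c_def by simp
      have "(r x ^^ Suc n) (r a v) = (r x ^^ n) (r c v) + (r x ^^ n) (r a (r x v))"
        by (simp only: funpow_Suc_right comp_def 1 fa)
      moreover have "(r x ^^ Suc n) v = (r x ^^ n) (r x v)"
        by (simp only: funpow_Suc_right comp_def)
      ultimately show "(r x ^^ Suc n) (r a v) - r a ((r x ^^ Suc n) v)
         = B a (r x v) + (r c ((r x ^^ n) v) + B c v)"
        unfolding B_def by (simp add: algebra_simps)
    qed
    have "B a \<in> Tn r A x n" "B c \<in> Tn r A x n" using Suc a c B_def by auto
    hence "(\<lambda>v. B a (r x v)) \<in> Tn r A x (Suc n)" "B c \<in> Tn r A x (Suc n)"
      using Tn_shift[of r, OF r0 A0] Tn_mono[of r, OF r0 A0] by auto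
    moreover have "(\<lambda>v. r c ((r x ^^ n) v)) \<in> Tn r A x (Suc n)" by (rule Tn_top[of r, OF r0 A0 c])
    ultimately have "(\<lambda>v. B a (r x v) + (r c ((r x ^^ n) v) + B c v)) \<in> Tn r A x (Suc n)"
      using Tn_add[of r A, OF radd Aadd] by blast
    then show "(\<lambda>v. (r x ^^ Suc n) (r a v) - r a ((r x ^^ Suc n) v)) \<in> Tn r A x (Suc n)"
      using eq by simp
  qed
qed

lemma part_i:
  fixes r :: "'l::ab_group_add \<Rightarrow> 'v::ab_group_add \<Rightarrow> 'v" and br :: "'l \<Rightarrow> 'l \<Rightarrow> 'l"
  assumes vs: "vector_space sV"
    and rlin: "\<And>y u w. r y (u + w) = r y u + r y w" "\<And>y c w. r y (sV c w) = sV c (r y w)"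
    and rbr: "\<And>a b v. r (br a b) v = r b (r a v) - r a (r b v)"
    and xA: "\<And>a. a \<in> A \<Longrightarrow> br x a \<in> A"
  shows "\<forall>a\<in>A. (\<lambda>v. (r a ^^ Suc n) (r x v) - r x ((r a ^^ Suc n) v)) \<in> rA_power sV r A (Suc n)"
proof (induction n)
  case 0
  show ?case
  proof
    fix a assume a: "a \<in> A"
    have e0: "(\<lambda>v. (r a ^^ Suc 0) (r x v) - r x ((r a ^^ Suc 0) v)) = foldr (\<circ>) (map r [br x a]) id"
      by (simp add: rbr fun_eq_iff)
    have m0: "foldr (\<circ>) (map r [br x a]) id \<in> {foldr (\<circ>) (map r as) id | as. length as = Suc 0 \<and> set as \<subseteq> A}"
      using xA[OF a] by (intro CollectI exI[of _ "[br x a]"]) simp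
    show "(\<lambda>v. (r a ^^ Suc 0) (r x v) - r x ((r a ^^ Suc 0) v)) \<in> rA_power sV r A (Suc 0)"
      unfolding rA_power_def e0 by (rule span_single[OF vs m0])
  qed
next
  case (Suc n)
  show ?case
  proof
    fix a assume a: "a \<in> A"
    define D where "D = (\<lambda>v. (r a ^^ Suc n) (r x v) - r x ((r a ^^ Suc n) v))"
    have rdiff: "r y (u - w) = r y u - r y w" for y u w
    proof -
      have "r y u = r y (u - w) + r y w" using rlin(1)[of y "u - w" w] by simp
      then show ?thesis by (simp add: algebra_simps)
    qed
    have r00: "r y 0 = 0" for y using rlin(1)[of y 0 0] by simp
    have eq: "(\<lambda>v. (r a ^^ Suc (Suc n)) (r x v) - r x ((r a ^^ Suc (Suc n)) v))
        = (\<lambda>v. r a (D v) + r (br x a) ((r a ^^ Suc n) v))"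
    proof
      fix v
      define w where "w = (r a ^^ Suc n) v"
      define P where "P = (r a ^^ Suc n) (r x v)"
      have e1: "(r a ^^ Suc (Suc n)) (r x v) = r a P" unfolding P_def by (simp only: funpow.simps(2) comp_def)
      have e2: "(r a ^^ Suc (Suc n)) v = r a w" unfolding w_def by (simp only: funpow.simps(2) comp_def)
      have e3: "D v = P - r x w" unfolding D_def P_def w_def by simp
      show "(r a ^^ Suc (Suc n)) (r x v) - r x ((r a ^^ Suc (Suc n)) v)
          = r a (D v) + r (br x a) ((r a ^^ Suc n) v)"
        unfolding e1 e2 e3 w_def[symmetric] rdiff rbr by simp
    qed
    have "D \<in> rA_power sV r A (Suc n)" using Suc a D_def by simp
    hence 1: "(\<lambda>v. r a (D v)) \<in> rA_power sV r A (Suc (Suc n))"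
      unfolding rA_power_def
    proof (rule span_comp)
      fix f assume "f \<in> {foldr (\<circ>) (map r as) id |as. length as = Suc n \<and> set as \<subseteq> A}"
      then obtain as where "f = foldr (\<circ>) (map r as) id" "length as = Suc n" "set as \<subseteq> A" by blast
      then show "r a \<circ> f \<in> {foldr (\<circ>) (map r as) id |as. length as = Suc (Suc n) \<and> set as \<subseteq> A}"
        using a by (intro CollectI exI[of _ "a # as"]) simp
    qed (simp_all add: rlin r00)
    have "foldr (\<circ>) (map r (br x a # replicate (Suc n) a)) id \<in> {foldr (\<circ>) (map r as) id | as. length as = Suc (Suc n) \<and> set as \<subseteq> A}"
      using xA[OF a] a by (intro CollectI exI[of _ "br x a # replicate (Suc n) a"]) auto
    hence "foldr (\<circ>) (map r (br x a # replicate (Suc n) a)) id \<in> rA_power sV r A (Suc (Suc n))"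
      unfolding rA_power_def by (rule span_single[OF vs])
    hence 2: "(\<lambda>v. r (br x a) ((r a ^^ Suc n) v)) \<in> rA_power sV r A (Suc (Suc n))"
      by (simp only: list.map foldr_Cons foldr_replicate comp_def)
    show "(\<lambda>v. (r a ^^ Suc (Suc n)) (r x v) - r x ((r a ^^ Suc (Suc n)) v)) \<in> rA_power sV r A (Suc (Suc n))"
      unfolding eq using span_add[OF 1[unfolded rA_power_def] 2[unfolded rA_power_def]]
      unfolding rA_power_def .
  qed
qed

lemma Tn_rx: "Tn r A x (Suc k) = rA_rx_sum r A x k"
  unfolding Tn_def rA_rx_sum_def by (simp add: lessThan_Suc_atMost less_Suc_eq_le)

theorem lemma2p11:
  fixes sL :: "'k::field_char_0 \<Rightarrow> 'l::ab_group_add \<Rightarrow> 'l"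
    and sV :: "'k \<Rightarrow> 'v::ab_group_add \<Rightarrow> 'v"
    and br :: "'l \<Rightarrow> 'l \<Rightarrow> 'l"
    and l r :: "'l \<Rightarrow> 'v \<Rightarrow> 'v"
    and A :: "'l set" and x :: 'l
  assumes "alg_closed_field TYPE('k)"
    and "leibniz_algebra sL br"
    and "leibniz_rep sL br sV l r"
    and "module.subspace sL A"
    and "x \<in> normalizer br A"
  shows "\<forall>k::nat. \<forall>a\<in>A.
           (\<lambda>v. (r a ^^ (k+1)) (r x v) - r x ((r a ^^ (k+1)) v)) \<in> rA_power sV r A (k+1)
         \<and> (\<lambda>v. (r x ^^ (k+1)) (r a v) - r a ((r x ^^ (k+1)) v)) \<in> rA_rx_sum r A x k"
proof -
  have rep: "fd_vector_space sV" "\<forall>y. Vector_Spaces.linear sV sV (r y)"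
     "\<forall>v. Vector_Spaces.linear sL sV (\<lambda>x. r x v)"
     "\<forall>x y v. r (br x y) v = (r y \<circ> r x) v - (r x \<circ> r y) v"
    using assms(3) unfolding leibniz_rep_def by blast+
  have vs: "vector_space sV" using rep(1) unfolding fd_vector_space_def by blast
  have vL: "vector_space sL" using assms(2) unfolding leibniz_algebra_def fd_vector_space_def by blast
  hence mL: "module sL" by (simp add: module_iff_vector_space)
  have rlin1: "\<And>y u w. r y (u + w) = r y u + r y w"
    using rep(2) unfolding Vector_Spaces.linear_iff by blast
  have rlin2: "\<And>y c w. r y (sV c w) = sV c (r y w)"
    using rep(2) unfolding Vector_Spaces.linear_iff by blast
  have radd: "\<And>a b v. r (a + b) v = r a v + r b v"
    using rep(3) unfolding Vector_Spaces.linear_iff by blast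
  have r0: "r 0 v = 0" for v using radd[of 0 0 v] by simp
  have rbr: "\<And>a b v. r (br a b) v = r b (r a v) - r a (r b v)" using rep(4) by simp
  have sub: "0 \<in> A" "\<And>a b. a \<in> A \<Longrightarrow> b \<in> A \<Longrightarrow> a + b \<in> A"
    using assms(4) module.subspace_def[OF mL] by blast+
  have xA: "\<And>a. a \<in> A \<Longrightarrow> br x a \<in> A" and Ax: "\<And>a. a \<in> A \<Longrightarrow> br a x \<in> A"
    using assms(5) unfolding normalizer_def by blast+
  show ?thesis
  proof (intro allI ballI conjI)
    fix k :: nat and a assume a: "a \<in> A"
    show "(\<lambda>v. (r a ^^ (k+1)) (r x v) - r x ((r a ^^ (k+1)) v)) \<in> rA_power sV r A (k+1)"
      using part_i[where sV=sV and r=r and br=br and x=x and A=A and n=k, OF vs rlin1 rlin2 rbr xA] a by simp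
    show "(\<lambda>v. (r x ^^ (k+1)) (r a v) - r a ((r x ^^ (k+1)) v)) \<in> rA_rx_sum r A x k"
      using part_ii[where r=r and x=x and br=br and A=A and n="Suc k", OF radd r0 rlin1 rbr sub Ax] a by (simp add: Tn_rx)
  qed
qed

end
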